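(* Let $\lambda$ be a partition of $n$ and $\lambda'$ its conjugate. Let $B_\lambda\times 1\subseteq[n]\times[n]$ and $B_{\lambda'}\subseteq[n]\times[n]$ be the Ferrers boards defined in the context. Then the complement $([n]\times[n])\setminus(B_\lambda\times 1)$, rotated by $180^\circ$ (i.e. under the map $(i,j)\mapsto(n+1-i,\,n+1-j)$), equals $B_{\lambda'}$.
   Context: Partitions are drawn as diagrams in French convention (rows counted from bottom to top, row $j$ has $\lambda_j$ left-justified boxes); the box in column $i$ and row $j$ is $(i,j)$ and its content is $c(i,j)=i-j$. For a partition $\lambda$ of $n$, list the contents of its $n$ boxes in weakly decreasing order $c_1\ge c_2\ge\cdots\ge c_n$. The board $B_\lambda\subseteq[n]\times[n]$ (viewed as an $n\times n$ array of squares $(i,j)$, column $i$, row $j$) is the Ferrers board whose $i$-th column consists of the squares $(i,j)$ with $1\le j\le c_i+i-1$ (so column $i$ has height $c_i+i-1$). The board $B_\lambda\times 1$ is obtained by increasing the height of every column by one, i.e. its $i$-th column has height $c_i+i$. *)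

theory Defs
  imports Main
begin

text \<open>A partition of n: a weakly decreasing list of positive parts summing to n.
  Row j (1-based, French convention, bottom to top) has lam ! (j-1) boxes.\<close>
definition is_partition :: "nat \<Rightarrow> nat list \<Rightarrow> bool" where
  "is_partition n lam \<longleftrightarrow> sorted_wrt (\<ge>) lam \<and> 0 \<notin> set lam \<and> sum_list lam = n"

definition conj_part :: "nat list \<Rightarrow> nat list" where
  "conj_part lam = map (\<lambda>i. length (filter (\<lambda>x. i \<le> x) lam))
      [1..<Suc (if lam = [] then 0 else hd lam)]"

definition boxes :: "nat list \<Rightarrow> (nat \<times> nat) set" where
  "boxes lam = {(i, j). 1 \<le> j \<and> j \<le> length lam \<and> 1 \<le> i \<and> i \<le> lam ! (j - 1)}"

definition content :: "nat \<times> nat \<Rightarrow> int" where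
  "content b = int (fst b) - int (snd b)"

definition contents_desc :: "nat list \<Rightarrow> int list" where
  "contents_desc lam = rev (sort [content (i, j). j \<leftarrow> [1..<Suc (length lam)], i \<leftarrow> [1..<Suc (lam ! (j - 1))]])"

text \<open>c_i, 1-based.\<close>
definition cont :: "nat list \<Rightarrow> nat \<Rightarrow> int" where
  "cont lam i = contents_desc lam ! (i - 1)"

definition board :: "nat \<Rightarrow> nat list \<Rightarrow> (nat \<times> nat) set" where
  "board n lam = {(i, j). 1 \<le> i \<and> i \<le> n \<and> 1 \<le> j \<and> j \<le> n \<and>
       int j \<le> cont lam i + int i - 1}"

definition board_x1 :: "nat \<Rightarrow> nat list \<Rightarrow> (nat \<times> nat) set" where
  "board_x1 n lam = {(i, j). 1 \<le> i \<and> i \<le> n \<and> 1 \<le> j \<and> j \<le> n \<and>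
       int j \<le> cont lam i + int i}"

definition rot180 :: "nat \<Rightarrow> nat \<times> nat \<Rightarrow> nat \<times> nat" where
  "rot180 n p = (n + 1 - fst p, n + 1 - snd p)"

end

theory Submission
  imports Defs "HOL-Library.Multiset"
begin

declare upt_Suc[simp del]

lemma filt_len:
  "sorted_wrt (\<ge>) (xs::nat list) \<Longrightarrow> 1 \<le> i \<Longrightarrow>
   (i \<le> length (filter (\<lambda>x. j \<le> x) xs)) \<longleftrightarrow> (i \<le> length xs \<and> j \<le> xs ! (i - 1))"
proof (induction xs arbitrary: i)
  case Nil
  then show ?case by simp
next
  case (Cons x xs)
  show ?case
  proof (cases "j \<le> x")
    case True
    show ?thesis
    proof (cases "i = 1")
      case True
      then show ?thesis using \<open>j \<le> x\<close> by simp
    next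
      case False
      then have "1 \<le> i - 1" using Cons.prems by simp
      with Cons.IH[of "i - 1"] Cons.prems False True show ?thesis
        by (cases i) auto
    qed
  next
    case False
    have "filter (\<lambda>x. j \<le> x) xs = []" using Cons.prems False
      by (auto simp: filter_empty_conv)
    moreover have "\<not> (i \<le> length (x # xs) \<and> j \<le> (x # xs) ! (i - 1))"
    proof (cases "i - 1")
      case 0 then show ?thesis using False Cons.prems by simp
    next
      case (Suc k)
      show ?thesis
      proof (cases "k < length xs")
        case True
        then have "xs ! k \<le> x" using Cons.prems by auto
        then show ?thesis using Suc False by simp
      next
        case F: False
        then show ?thesis using Suc Cons.prems by auto
      qed
    qed
    ultimately show ?thesis using False Cons.prems by auto
  qed
qed

lemma sorted_hd_ge:
  "sorted_wrt (\<ge>) (xs::nat list) \<Longrightarrow> k < length xs \<Longrightarrow> xs ! k \<le> hd xs"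
  by (cases xs) (auto simp: nth_Cons split: nat.splits)

lemma boxes_conj:
  assumes "is_partition n lam"
  shows "boxes (conj_part lam) = prod.swap ` boxes lam"
proof -
  have s: "sorted_wrt (\<ge>) lam" using assms by (simp add: is_partition_def)
  have len: "length (conj_part lam) = (if lam = [] then 0 else hd lam)"
    by (simp add: conj_part_def)
  have nth: "\<And>i. i < length (conj_part lam) \<Longrightarrow>
      conj_part lam ! i = length (filter (\<lambda>x. Suc i \<le> x) lam)"
    by (simp add: conj_part_def len del: upt_Suc)
  show ?thesis
  proof (rule set_eqI, clarify)
    fix a b
    have "(a, b) \<in> boxes (conj_part lam) \<longleftrightarrow>
       (1 \<le> b \<and> b \<le> length (conj_part lam) \<and> 1 \<le> a \<and> a \<le> conj_part lam ! (b - 1))"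
      by (simp add: boxes_def)
    also have "\<dots> \<longleftrightarrow> (1 \<le> b \<and> b \<le> length (conj_part lam) \<and> 1 \<le> a \<and> a \<le> length lam \<and> b \<le> lam ! (a - 1))"
      using filt_len[OF s, of a b] nth[of "b - 1"] by auto
    also have "\<dots> \<longleftrightarrow> (1 \<le> b \<and> 1 \<le> a \<and> a \<le> length lam \<and> b \<le> lam ! (a - 1))"
      using sorted_hd_ge[OF s, of "a - 1"] len by (auto intro: le_trans)
    also have "\<dots> \<longleftrightarrow> (b, a) \<in> boxes lam" by (auto simp: boxes_def)
    also have "\<dots> \<longleftrightarrow> (a, b) \<in> prod.swap ` boxes lam" by force
    finally show "((a, b) \<in> boxes (conj_part lam)) = ((a, b) \<in> prod.swap ` boxes lam)" .
  qed
qed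

definition clist :: "nat list \<Rightarrow> int list" where
  "clist lam = [content (i, j). j \<leftarrow> [1..<Suc (length lam)], i \<leftarrow> [1..<Suc (lam ! (j - 1))]]"

definition plist :: "nat list \<Rightarrow> (nat \<times> nat) list" where
  "plist lam = [(i, j). j \<leftarrow> [1..<Suc (length lam)], i \<leftarrow> [1..<Suc (lam ! (j - 1))]]"

lemma clist_plist: "clist lam = map content (plist lam)"
  by (simp add: clist_def plist_def map_concat comp_def)

lemma distinct_blocks:
  "distinct (concat (map (\<lambda>j. map (\<lambda>i. (i, j)) (h j)) [a..<b]))"
  if "\<And>j. distinct (h (j::nat))" for h :: "nat \<Rightarrow> nat list"
proof (induction b)
  case 0
  then show ?case by simp
next
  case (Suc b)
  then show ?case using that
    by (auto simp: upt_Suc distinct_map inj_on_def)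
qed

lemma plist_distinct: "distinct (plist lam)"
  unfolding plist_def
  by (rule distinct_blocks) simp

lemma plist_set: "set (plist lam) = boxes lam"
  unfolding plist_def boxes_def by (force simp: Suc_le_eq)

lemma mset_clist: "mset (clist lam) = image_mset content (mset_set (boxes lam))"
proof -
  have "mset (plist lam) = mset_set (boxes lam)"
    using mset_set_set[OF plist_distinct[of lam]] plist_set[of lam] by simp
  then show ?thesis by (simp only: clist_plist mset_map)
qed

lemma length_plist: "length (plist lam) = sum_list lam"
proof -
  have "length (plist lam) = sum_list (map (\<lambda>j. lam ! (j - 1)) [1..<Suc (length lam)])"
    unfolding plist_def length_concat map_map comp_def length_map length_upt diff_Suc_1 ..
  also have "map (\<lambda>j. lam ! (j - 1)) [1..<Suc (length lam)] = lam"
  proof -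
    have "[1..<Suc (length lam)] = map Suc [0..<length lam]" by (simp add: map_Suc_upt)
    then have "map (\<lambda>j. lam ! (j - 1)) [1..<Suc (length lam)] = map (\<lambda>j. lam ! j) [0..<length lam]"
      by simp
    also have "\<dots> = lam" by (rule map_nth)
    finally show ?thesis .
  qed
  finally show ?thesis .
qed

lemma mset_clist_conj:
  assumes "is_partition n lam"
  shows "mset (clist (conj_part lam)) = image_mset uminus (mset (clist lam))"
proof -
  have "mset (clist (conj_part lam)) = image_mset content (mset_set (prod.swap ` boxes lam))"
    using mset_clist boxes_conj[OF assms] by metis
  also have "\<dots> = image_mset content (image_mset prod.swap (mset_set (boxes lam)))"
    by (subst image_mset_mset_set) (auto simp: inj_on_def)
  also have "\<dots> = image_mset uminus (image_mset content (mset_set (boxes lam)))"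
    by (simp add: multiset.map_comp comp_def content_def case_prod_unfold)
  finally show ?thesis by (simp add: mset_clist)
qed

lemma contents_desc_clist: "contents_desc lam = rev (sort (clist lam))"
  by (simp add: contents_desc_def clist_def)

lemma sort_neg:
  assumes "mset ys = image_mset uminus (mset (xs::int list))"
  shows "sort ys = map uminus (rev (sort xs))"
proof (rule properties_for_sort)
  show "mset (map uminus (rev (sort xs))) = mset ys" using assms by simp
  show "sorted (map uminus (rev (sort xs)))"
    by (simp add: sorted_map sorted_wrt_rev)
qed


lemma cont_conj:
  assumes P: "is_partition n lam" and i: "1 \<le> i" "i \<le> n"
  shows "cont (conj_part lam) i = - cont lam (n + 1 - i)"
proof -
  define S where "S = sort (clist lam)"
  have lenS: "length S = n"
    using P by (simp add: S_def clist_plist length_plist is_partition_def)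
  have "sort (clist (conj_part lam)) = map uminus (rev S)"
    unfolding S_def by (rule sort_neg[OF mset_clist_conj[OF P]])
  then have c1: "contents_desc (conj_part lam) = map uminus S"
    by (simp add: contents_desc_clist rev_map)
  have c2: "contents_desc lam = rev S" by (simp add: contents_desc_clist S_def)
  have "cont (conj_part lam) i = - S ! (i - 1)"
    using i lenS by (simp add: cont_def c1)
  moreover have "cont lam (n + 1 - i) = S ! (i - 1)"
    using i lenS by (simp add: cont_def c2 rev_nth)
  ultimately show ?thesis by simp
qed

theorem mainTheorem1:
  fixes n :: nat and lam :: "nat list"
  assumes "is_partition n lam"
  shows "rot180 n ` (({1..n} \<times> {1..n}) - board_x1 n lam) = board n (conj_part lam)"
proof (rule set_eqI)
  fix p :: "nat \<times> nat"
  obtain a b where p: "p = (a, b)" by fastforce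
  have inv: "\<And>q. q \<in> {1..n} \<times> {1..n} \<Longrightarrow> rot180 n (rot180 n q) = q"
    by (auto simp: rot180_def)
  have rng: "\<And>q. q \<in> {1..n} \<times> {1..n} \<Longrightarrow> rot180 n q \<in> {1..n} \<times> {1..n}"
    by (auto simp: rot180_def)
  have img: "p \<in> rot180 n ` (({1..n} \<times> {1..n}) - board_x1 n lam) \<longleftrightarrow>
      p \<in> {1..n} \<times> {1..n} \<and> rot180 n p \<notin> board_x1 n lam"
  proof
    assume "p \<in> rot180 n ` (({1..n} \<times> {1..n}) - board_x1 n lam)"
    then obtain q where q: "q \<in> {1..n} \<times> {1..n}" "q \<notin> board_x1 n lam" "p = rot180 n q"
      by auto
    then show "p \<in> {1..n} \<times> {1..n} \<and> rot180 n p \<notin> board_x1 n lam"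
      using inv rng by auto
  next
    assume h: "p \<in> {1..n} \<times> {1..n} \<and> rot180 n p \<notin> board_x1 n lam"
    then have "rot180 n p \<in> ({1..n} \<times> {1..n}) - board_x1 n lam" using rng by auto
    moreover have "p = rot180 n (rot180 n p)" using inv h by auto
    ultimately show "p \<in> rot180 n ` (({1..n} \<times> {1..n}) - board_x1 n lam)"
      by (metis image_eqI)
  qed
  show "p \<in> rot180 n ` (({1..n} \<times> {1..n}) - board_x1 n lam) \<longleftrightarrow> p \<in> board n (conj_part lam)"
  proof (cases "1 \<le> a \<and> a \<le> n \<and> 1 \<le> b \<and> b \<le> n")
    case True
    have cc: "cont (conj_part lam) a = - cont lam (n + 1 - a)"
      using cont_conj[OF assms] True by simp
    have e1: "int (n + 1 - a) = int n + 1 - int a" "int (n + 1 - b) = int n + 1 - int b"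
      using True by auto
    show ?thesis unfolding img unfolding p using True
      by (auto simp: rot180_def board_x1_def board_def cc e1)
  next
    case False
    then show ?thesis unfolding img unfolding p by (auto simp: board_def)
  qed
qed

end
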